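(* Suppose $d=1$ and let $\lambda\in\mathbb R$. Then $L,(L^*+\lambda)^2$ is a Leonard pair on $\mathcal P_d(\mathbb R)$ if and only if $2\lambda\neq-1$.
   Context: Let $r,s\in(-1,\infty)$. Write $(x)_i=x(x+1)\cdots(x+i-1)$, $(x)_0=1$. For $0\le i\le d$ put $\theta_i=(d-i)(d-i+r+s+1)$ (distinct) and $\theta^*_i=i$. Put $b^*_i=\frac{(d-i)(i-d-s)(2d-2i+r+s+2)_i}{(2d-2i+r+s)_{i+1}}$ ($0\le i\le d-1$), $c^*_i=\frac{i(i-d-r-1)(d-i+r+s+1)_{d-i}}{(d-i+r+s+2)_{d-i+1}}$ ($1\le i\le d$), $b^*_d=c^*_0=0$, and $a^*_i=\theta^*_0-b^*_i-c^*_i$. Let $\mathcal P_d(\mathbb R)$ be the real polynomials of degree at most $d$, each determined by its values at $\theta_0,\dots,\theta_d$. Let $L,L^*$ be the linear maps on $\mathcal P_d(\mathbb R)$ with $(Lf)(\theta_i)=\theta_i f(\theta_i)$ and $(L^*f)(\theta_i)=b^*_i f(\theta_{i+1})+a^*_i f(\theta_i)+c^*_i f(\theta_{i-1})$ ($0\le i\le d$; terms with coefficient $b^*_d$ or $c^*_0$ omitted); $\lambda$ stands for $\lambda$ times the identity. A square matrix is irreducible tridiagonal if its nonzero entries lie on the diagonal, subdiagonal or superdiagonal and all subdiagonal and superdiagonal entries are nonzero. A Leonard pair on a nonzero finite-dimensional vector space $V$ is an ordered pair $A,A^*$ of linear maps on $V$ such that there is an ordered basis in which $A$ is diagonal and $A^*$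 is irreducible tridiagonal, and there is an ordered basis in which $A^*$ is diagonal and $A$ is irreducible tridiagonal. *)

theory Defs
  imports "HOL-Computational_Algebra.Polynomial"
begin

definition th :: "real \<Rightarrow> real \<Rightarrow> nat \<Rightarrow> nat \<Rightarrow> real" where
  "th r s d i = (real d - real i) * (real d - real i + r + s + 1)"

definition ths :: "nat \<Rightarrow> real" where
  "ths i = real i"

definition bs :: "real \<Rightarrow> real \<Rightarrow> nat \<Rightarrow> nat \<Rightarrow> real" where
  "bs r s d i = (if i < d then
     (real d - real i) * (real i - real d - s) * pochhammer (2 * real d - 2 * real i + r + s + 2) i
       / pochhammer (2 * real d - 2 * real i + r + s) (i + 1)
   else 0)"

definition cs :: "real \<Rightarrow> real \<Rightarrow> nat \<Rightarrow> nat \<Rightarrow> real" where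
  "cs r s d i = (if 1 \<le> i then
     real i * (real i - real d - r - 1) * pochhammer (real d - real i + r + s + 1) (d - i)
       / pochhammer (real d - real i + r + s + 2) (d - i + 1)
   else 0)"

definition as :: "real \<Rightarrow> real \<Rightarrow> nat \<Rightarrow> nat \<Rightarrow> real" where
  "as r s d i = ths 0 - bs r s d i - cs r s d i"

definition Pd :: "nat \<Rightarrow> real poly set" where
  "Pd d = {p. degree p \<le> d}"

definition LL :: "real \<Rightarrow> real \<Rightarrow> nat \<Rightarrow> real poly \<Rightarrow> real poly" where
  "LL r s d f = (THE g. degree g \<le> d \<and>
      (\<forall>i\<le>d. poly g (th r s d i) = th r s d i * poly f (th r s d i)))"

definition LLs :: "real \<Rightarrow> real \<Rightarrow> nat \<Rightarrow> real poly \<Rightarrow> real poly" where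
  "LLs r s d f = (THE g. degree g \<le> d \<and>
      (\<forall>i\<le>d. poly g (th r s d i) =
          (if i < d then bs r s d i * poly f (th r s d (i + 1)) else 0)
        + as r s d i * poly f (th r s d i)
        + (if 0 < i then cs r s d i * poly f (th r s d (i - 1)) else 0)))"

definition lin_on :: "real poly set \<Rightarrow> (real poly \<Rightarrow> real poly) \<Rightarrow> bool" where
  "lin_on V A \<longleftrightarrow> A ` V \<subseteq> V \<and>
     (\<forall>x\<in>V. \<forall>y\<in>V. A (x + y) = A x + A y) \<and>
     (\<forall>c. \<forall>x\<in>V. A (smult c x) = smult c (A x))"

definition ordered_basis :: "real poly set \<Rightarrow> nat \<Rightarrow> (nat \<Rightarrow> real poly) \<Rightarrow> bool" where
  "ordered_basis V n b \<longleftrightarrow> (\<forall>i<n. b i \<in> V) \<and>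
     (\<forall>c. (\<Sum>i<n. smult (c i) (b i)) = 0 \<longrightarrow> (\<forall>i<n. c i = 0)) \<and>
     (\<forall>v\<in>V. \<exists>c. v = (\<Sum>i<n. smult (c i) (b i)))"

definition represents :: "nat \<Rightarrow> (nat \<Rightarrow> real poly) \<Rightarrow> (real poly \<Rightarrow> real poly) \<Rightarrow> (nat \<Rightarrow> nat \<Rightarrow> real) \<Rightarrow> bool" where
  "represents n b A M \<longleftrightarrow> (\<forall>j<n. A (b j) = (\<Sum>i<n. smult (M i j) (b i)))"

definition diagonal_mat :: "nat \<Rightarrow> (nat \<Rightarrow> nat \<Rightarrow> real) \<Rightarrow> bool" where
  "diagonal_mat n M \<longleftrightarrow> (\<forall>i<n. \<forall>j<n. i \<noteq> j \<longrightarrow> M i j = 0)"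

definition irred_tridiagonal :: "nat \<Rightarrow> (nat \<Rightarrow> nat \<Rightarrow> real) \<Rightarrow> bool" where
  "irred_tridiagonal n M \<longleftrightarrow>
     (\<forall>i<n. \<forall>j<n. (i + 1 < j \<or> j + 1 < i) \<longrightarrow> M i j = 0) \<and>
     (\<forall>i. i + 1 < n \<longrightarrow> M (i + 1) i \<noteq> 0 \<and> M i (i + 1) \<noteq> 0)"

definition leonard_pair :: "real poly set \<Rightarrow> (real poly \<Rightarrow> real poly) \<Rightarrow> (real poly \<Rightarrow> real poly) \<Rightarrow> bool" where
  "leonard_pair V A As \<longleftrightarrow> lin_on V A \<and> lin_on V As \<and>
     (\<exists>n b M Ms. ordered_basis V n b \<and> represents n b A M \<and> represents n b As Ms \<and>
        diagonal_mat n M \<and> irred_tridiagonal n Ms) \<and>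
     (\<exists>n b M Ms. ordered_basis V n b \<and> represents n b A M \<and> represents n b As Ms \<and>
        irred_tridiagonal n M \<and> diagonal_mat n Ms)"

end

theory Submission
  imports Defs
begin

definition mk :: "real \<Rightarrow> real \<Rightarrow> real \<Rightarrow> real \<Rightarrow> real poly" where
  "mk r s a b = [:b, (a - b) / (r + s + 2):]"

lemma deg_mk: "degree (mk r s a b) \<le> 1" by (simp add: mk_def)

lemma th1: "th r s 1 0 = r+s+2" "th r s 1 1 = 0" by (simp_all add: th_def)
lemma bs0: "bs r s 1 0 = -(1+s)/(r+s+2)" by (simp add: bs_def)
lemma cs1: "cs r s 1 1 = -(r+1)/(r+s+2)" by (simp add: cs_def)
lemma bs1: "bs r s 1 1 = 0" by (simp add: bs_def)
lemma cs0: "cs r s 1 0 = 0" by (simp add: cs_def)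
lemma as0: "as r s 1 0 = (1+s)/(r+s+2)" unfolding as_def bs0 cs0 by (simp add: ths_def) (simp add: minus_divide_left)
lemma as1: "as r s 1 1 = (r+1)/(r+s+2)" unfolding as_def bs1 cs1 by (simp add: ths_def) (simp add: minus_divide_left)
lemmas basics = th1 bs0 cs1 bs1 cs0 as0 as1
lemmas basicsS = basics[unfolded One_nat_def] deg_mk[unfolded One_nat_def]

lemma poly_mk:
  assumes "r+s+2 \<noteq> 0"
  shows "poly (mk r s a b) (r+s+2) = a" "poly (mk r s a b) 0 = b"
  using assms by (simp_all add: mk_def field_simps)


lemma deg1: "degree (g::real poly) \<le> 1 \<Longrightarrow> g = [:coeff g 0, coeff g 1:]"
  by (rule poly_eqI) (auto simp: coeff_pCons split: nat.split intro!: coeff_eq_0)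

lemma ext2:
  fixes r s :: real
  assumes "r+s+2 \<noteq> 0" "degree f \<le> 1" "degree g \<le> 1"
    "poly f (r+s+2) = poly g (r+s+2)" "poly f 0 = poly g 0"
  shows "f = g"
proof -
  have f: "f = [:coeff f 0, coeff f 1:]" by (rule deg1) (rule assms(2))
  have g: "g = [:coeff g 0, coeff g 1:]" by (rule deg1) (rule assms(3))
  have e1: "coeff f 0 = coeff g 0" using assms(5) by (subst (asm) f, subst (asm) g) simp
  have "coeff f 0 + (r+s+2) * coeff f 1 = coeff g 0 + (r+s+2) * coeff g 1"
    using assms(4) by (subst (asm) f, subst (asm) g) (simp add: algebra_simps)
  then have "coeff f 1 = coeff g 1" using e1 assms(1) by simp
  then show ?thesis using e1 f g by metis
qed

lemma the_mk:
  assumes "r+s+2 \<noteq> 0"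
  shows "(THE g. degree g \<le> 1 \<and> (\<forall>i\<le>1. poly g (th r s 1 i) = F i)) = mk r s (F 0) (F 1)"
proof (rule the_equality)
  have le1: "\<And>i::nat. i \<le> 1 \<longleftrightarrow> i = 0 \<or> i = 1" by auto
  have le1S: "\<And>i::nat. i \<le> Suc 0 \<longleftrightarrow> i = 0 \<or> i = 1" by auto
  show "degree (mk r s (F 0) (F 1)) \<le> 1 \<and> (\<forall>i\<le>1. poly (mk r s (F 0) (F 1)) (th r s 1 i) = F i)"
    using assms deg_mk[of r s "F 0" "F 1"] by (auto simp: le1 le1S basics basicsS poly_mk simp del: One_nat_def)
  fix g assume g: "degree g \<le> 1 \<and> (\<forall>i\<le>1. poly g (th r s 1 i) = F i)"
  show "g = mk r s (F 0) (F 1)"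
    by (rule ext2[OF assms]) (use g assms in \<open>auto simp: deg_mk poly_mk basics basicsS le1\<close>)
qed

lemma LL_eq: assumes "r+s+2 \<noteq> 0"
  shows "LL r s 1 f = mk r s ((r+s+2) * poly f (r+s+2)) 0"
  unfolding LL_def by (subst the_mk[OF assms]) (simp add: basics basicsS)

lemma LLs_eq: assumes "r+s+2 \<noteq> 0"
  shows "LLs r s 1 f = mk r s ((1+s)/(r+s+2) * poly f (r+s+2) - (1+s)/(r+s+2) * poly f 0)
     ((r+1)/(r+s+2) * poly f 0 - (r+1)/(r+s+2) * poly f (r+s+2))"
  unfolding LLs_def apply (subst the_mk[OF assms]) apply (simp add: basics basicsS)
  apply (rule arg_cong2[where f="mk r s"]) using assms by (simp_all add: field_simps)

lemma ext2t:
  fixes t :: real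
  assumes "t \<noteq> 0" "degree f \<le> 1" "degree g \<le> 1"
    "poly f t = poly g t" "poly f 0 = poly g 0"
  shows "f = g"
  using ext2[of "t - 2" 0 f g] assms by simp

definition crd :: "real \<Rightarrow> (nat \<Rightarrow> real poly) \<Rightarrow> nat \<Rightarrow> real poly \<Rightarrow> real" where
  "crd t b i g = (if i = 0
     then (poly g t * poly (b 1) 0 - poly g 0 * poly (b 1) t) /
          (poly (b 0) t * poly (b 1) 0 - poly (b 1) t * poly (b 0) 0)
     else (poly g 0 * poly (b 0) t - poly g t * poly (b 0) 0) /
          (poly (b 0) t * poly (b 1) 0 - poly (b 1) t * poly (b 0) 0))"

lemma sum2: "(\<Sum>i<2. f i) = f 0 + f (1::nat)"
  by (simp add: numeral_2_eq_2)

lemma cramer: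
  fixes P0 Q0 P1 Q1 p q :: real
  assumes "P0 * Q1 - P1 * Q0 \<noteq> 0"
  shows "(p*Q1 - q*P1)/(P0 * Q1 - P1 * Q0) * P0 + (q*P0 - p*Q0)/(P0 * Q1 - P1 * Q0) * P1 = p"
    "(p*Q1 - q*P1)/(P0 * Q1 - P1 * Q0) * Q0 + (q*P0 - p*Q0)/(P0 * Q1 - P1 * Q0) * Q1 = q"
proof -
  have "(p*Q1 - q*P1) * P0 + (q*P0 - p*Q0) * P1 = p * (P0 * Q1 - P1 * Q0)"
    "(p*Q1 - q*P1) * Q0 + (q*P0 - p*Q0) * Q1 = q * (P0 * Q1 - P1 * Q0)"
    by (simp_all add: algebra_simps)
  then show "(p*Q1 - q*P1)/(P0 * Q1 - P1 * Q0) * P0 + (q*P0 - p*Q0)/(P0 * Q1 - P1 * Q0) * P1 = p"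
    "(p*Q1 - q*P1)/(P0 * Q1 - P1 * Q0) * Q0 + (q*P0 - p*Q0)/(P0 * Q1 - P1 * Q0) * Q1 = q"
    using assms by (metis (no_types, lifting) add_divide_distrib nonzero_mult_div_cancel_right times_divide_eq_left)+
qed

lemma decomp:
  fixes t :: real
  assumes "t \<noteq> 0" "degree (b 0) \<le> 1" "degree (b 1) \<le> 1"
    "poly (b 0) t * poly (b 1) 0 - poly (b 1) t * poly (b 0) 0 \<noteq> 0" "degree g \<le> 1"
  shows "g = (\<Sum>i<2. smult (crd t b i g) (b i))"
proof (rule ext2t[OF assms(1) assms(5)])
  show "degree (\<Sum>i<2. smult (crd t b i g) (b i)) \<le> 1"
    unfolding sum2 using assms(2,3)
    by (intro degree_add_le order.trans[OF degree_smult_le]) auto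
  show "poly g t = poly (\<Sum>i<2. smult (crd t b i g) (b i)) t"
    using cramer(1)[OF assms(4), of "poly g t" "poly g 0"] unfolding sum2 by (simp add: crd_def)
  show "poly g 0 = poly (\<Sum>i<2. smult (crd t b i g) (b i)) 0"
    using cramer(2)[OF assms(4), of "poly g t" "poly g 0"] unfolding sum2 by (simp add: crd_def)
qed

lemma basis:
  fixes t :: real
  assumes "t \<noteq> 0" "degree (b 0) \<le> 1" "degree (b 1) \<le> 1"
    "poly (b 0) t * poly (b 1) 0 - poly (b 1) t * poly (b 0) 0 \<noteq> 0"
  shows "ordered_basis (Pd 1) 2 b"
  unfolding ordered_basis_def
proof (intro conjI allI impI ballI)
  fix i :: nat assume "i < 2"
  then have "i = 0 \<or> i = 1" by auto
  then show "b i \<in> Pd 1" using assms by (auto simp: Pd_def)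
next
  fix v assume "v \<in> Pd 1"
  then have "degree v \<le> 1" by (simp add: Pd_def)
  from decomp[OF assms this] show "\<exists>c. v = (\<Sum>i<2. smult (c i) (b i))" by (rule exI[of _ "\<lambda>i. crd t b i v"])
next
  fix c :: "nat \<Rightarrow> real" and i :: nat
  assume h: "(\<Sum>i<2. smult (c i) (b i)) = 0" and i: "i < 2"
  define P0 where "P0 = poly (b 0) t"
  define Q0 where "Q0 = poly (b 0) 0"
  define P1 where "P1 = poly (b 1) t"
  define Q1 where "Q1 = poly (b 1) 0"
  have e1: "c 0 * P0 + c 1 * P1 = 0" using arg_cong[OF h, of "\<lambda>p. poly p t"]
    unfolding sum2 P0_def P1_def by simp
  have e2: "c 0 * Q0 + c 1 * Q1 = 0" using arg_cong[OF h, of "\<lambda>p. poly p 0"]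
    unfolding sum2 Q0_def Q1_def by simp
  have D: "P0 * Q1 - P1 * Q0 \<noteq> 0" using assms(4) unfolding P0_def P1_def Q0_def Q1_def .
  have "c 0 * (P0 * Q1 - P1 * Q0) = Q1 * (c 0 * P0 + c 1 * P1) - P1 * (c 0 * Q0 + c 1 * Q1)"
    by (simp add: algebra_simps)
  then have "c 0 = 0" using e1 e2 D by simp
  moreover have "c 1 * (P0 * Q1 - P1 * Q0) = P0 * (c 0 * Q0 + c 1 * Q1) - Q0 * (c 0 * P0 + c 1 * P1)"
    by (simp add: algebra_simps)
  then have "c 1 = 0" using e1 e2 D by simp
  ultimately show "c i = 0" using i by (cases i) (auto simp: less_Suc_eq)
qed

lemma rep:
  fixes t :: real
  assumes "t \<noteq> 0" "degree (b 0) \<le> 1" "degree (b 1) \<le> 1"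
    "poly (b 0) t * poly (b 1) 0 - poly (b 1) t * poly (b 0) 0 \<noteq> 0"
    "degree (A (b 0)) \<le> 1" "degree (A (b 1)) \<le> 1"
  shows "represents 2 b A (\<lambda>i j. crd t b i (A (b j)))"
  unfolding represents_def
proof (intro allI impI)
  fix j :: nat assume "j < 2"
  then have "j = 0 \<or> j = 1" by auto
  then have "degree (A (b j)) \<le> 1" using assms by auto
  then show "A (b j) = (\<Sum>i<2. smult (crd t b i (A (b j))) (b i))"
    by (rule decomp[OF assms(1-4)])
qed

lemma diag2: "diagonal_mat 2 M \<longleftrightarrow> M 0 1 = 0 \<and> M 1 0 = 0"
  unfolding diagonal_mat_def by (auto simp: less_Suc_eq numeral_2_eq_2)

lemma irr2: "irred_tridiagonal 2 M \<longleftrightarrow> M 1 0 \<noteq> 0 \<and> M 0 1 \<noteq> 0"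
  unfolding irred_tridiagonal_def by (auto simp: less_Suc_eq numeral_2_eq_2)

theorem corollary2p10:
  fixes r s lam :: real
  assumes "r > -1" and "s > -1"
  shows "leonard_pair (Pd 1) (LL r s 1)
           ((\<lambda>f. LLs r s 1 f + smult lam f) \<circ> (\<lambda>f. LLs r s 1 f + smult lam f))
         \<longleftrightarrow> 2 * lam \<noteq> -1"
proof -
  define t where "t = r + s + 2"
  have t0: "t \<noteq> 0" "t > 0" using assms by (auto simp: t_def)
  define a where "a = (1 + s) / t"
  have ca: "(r + 1) / t = 1 - a" using t0 unfolding a_def by (simp add: field_simps t_def)
  have a0: "a \<noteq> 0" using assms t0 by (simp add: a_def)
  have a1: "1 - a \<noteq> 0" using assms t0 ca[symmetric] by simp
  define B where "B = (\<lambda>f. LLs r s 1 f + smult lam f)"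
  have tt: "r + s + 2 \<noteq> 0" using t0 by (simp add: t_def)
  have pmk: "poly (mk r s x y) t = x" "poly (mk r s x y) 0 = y" for x y
    using poly_mk[OF tt] by (simp_all add: t_def)
  have LLe: "LL r s 1 f = mk r s (t * poly f t) 0" for f
    using LL_eq[OF tt, of f] by (simp add: t_def)
  have LLse: "LLs r s 1 f = mk r s (a * (poly f t - poly f 0)) ((1 - a) * (poly f 0 - poly f t))" for f
    using LLs_eq[OF tt, of f] unfolding t_def[symmetric] a_def[symmetric] ca
    by (simp add: right_diff_distrib)
  have dLL: "degree (LL r s 1 f) \<le> 1" for f unfolding LLe by (rule deg_mk)
  have dLLs: "degree (LLs r s 1 f) \<le> 1" for f unfolding LLse by (rule deg_mk)
  have dB: "degree f \<le> 1 \<Longrightarrow> degree (B f) \<le> 1" for f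
    unfolding B_def by (intro degree_add_le dLLs order.trans[OF degree_smult_le])
  have vLL: "poly (LL r s 1 f) t = t * poly f t" "poly (LL r s 1 f) 0 = 0" for f
    unfolding LLe by (simp_all add: pmk)
  note vLLS = vLL[unfolded One_nat_def]
  have vB: "poly (B f) t = a * (poly f t - poly f 0) + lam * poly f t"
     "poly (B f) 0 = (1 - a) * (poly f 0 - poly f t) + lam * poly f 0" for f
    unfolding B_def LLse by (simp_all add: pmk)
  have ext: "degree f \<le> 1 \<Longrightarrow> degree g \<le> 1 \<Longrightarrow> poly f t = poly g t \<Longrightarrow> poly f 0 = poly g 0 \<Longrightarrow> f = g" for f g
    using ext2t[OF t0(1)] by blast
  have dadd: "degree f \<le> 1 \<Longrightarrow> degree g \<le> 1 \<Longrightarrow> degree (f + g) \<le> 1" for f g :: "real poly"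
    by (rule degree_add_le)
  have dsm: "degree f \<le> 1 \<Longrightarrow> degree (smult c f) \<le> 1" for f :: "real poly" and c
    by (rule order.trans[OF degree_smult_le])
  have Pd: "f \<in> Pd 1 \<longleftrightarrow> degree f \<le> 1" for f by (simp add: Pd_def)
  have linLL: "lin_on (Pd 1) (LL r s 1)"
    unfolding lin_on_def Pd
    by (auto simp: dLL dLL[unfolded One_nat_def] Pd_def intro!: ext dadd dsm simp: vLL vLLS algebra_simps)
  have linB: "lin_on (Pd 1) (B \<circ> B)"
    unfolding lin_on_def Pd
    by (auto simp: dB Pd_def dB[unfolded One_nat_def] dadd[unfolded One_nat_def] dsm[unfolded One_nat_def] intro!: ext dadd dsm simp: vB algebra_simps)
  have goal: "leonard_pair (Pd 1) (LL r s 1) (B \<circ> B) \<longleftrightarrow> 2 * lam \<noteq> -1"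
  proof
    assume LP: "leonard_pair (Pd 1) (LL r s 1) (B \<circ> B)"
    show "2 * lam \<noteq> -1"
    proof
      assume h: "2 * lam = -1"
      then have lam: "lam = -1/2" by simp
      have B2: "B (B g) = smult (1/4) g" if g: "degree g \<le> 1" for g
      proof (rule ext)
        show "degree (B (B g)) \<le> 1" using g by (intro dB)
        show "degree (smult (1/4) g) \<le> 1" using g by (rule dsm)
        show "poly (B (B g)) t = poly (smult (1 / 4) g) t"
          by (simp add: vB lam algebra_simps)
        show "poly (B (B g)) 0 = poly (smult (1 / 4) g) 0"
          by (simp add: vB lam field_simps)
      qed
      from LP obtain n b Ms M where ob: "ordered_basis (Pd 1) n b"
        and rp: "represents n b (B \<circ> B) Ms" and irr: "irred_tridiagonal n Ms"
        unfolding leonard_pair_def by blast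
      have n2: "n \<ge> 2"
      proof (rule ccontr)
        assume "\<not> 2 \<le> n" then have n01: "n = 0 \<or> n = 1" by auto
        have "1 \<in> Pd 1" "[:0,1:] \<in> Pd 1" by (simp_all add: Pd_def)
        then obtain c c' where e1: "1 = (\<Sum>i<n. smult (c i) (b i))"
          and e2: "[:0,1:] = (\<Sum>i<n. smult (c' i) (b i))"
          using ob unfolding ordered_basis_def by meson
        show False using n01
        proof
          assume "n = 0" then show False using e1 by simp
        next
          assume n1: "n = 1"
          then have e1': "1 = smult (c 0) (b 0)" and e2': "[:0,1:] = smult (c' 0) (b 0)"
            using e1 e2 by simp_all
          have "c 0 \<noteq> 0" using e1' by auto
          then have d0: "degree (b 0) = 0" using arg_cong[OF e1', of degree] by simp
          have "degree ([:0,1:]::real poly) \<le> degree (b 0)"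
            using degree_smult_le[of "c' 0" "b 0"] e2' by simp
          then show False using d0 by simp
        qed
      qed
      have b0: "degree (b 0) \<le> 1" using ob n2 unfolding ordered_basis_def Pd by auto
      have "B (B (b 0)) = (\<Sum>i<n. smult (Ms i 0) (b i))" using rp n2 unfolding represents_def by auto
      then have S: "(\<Sum>i<n. smult (Ms i 0) (b i)) = smult (1/4) (b 0)" using B2[OF b0] by simp
      define c where "c i = Ms i 0 - (if i = 0 then 1/4 else 0)" for i
      have "smult (c i) (b i) = smult (Ms i 0) (b i) - (if i = 0 then smult (1/4) (b 0) else 0)" for i
        by (simp add: c_def smult_diff_left)
      then have "(\<Sum>i<n. smult (c i) (b i)) = (\<Sum>i<n. smult (Ms i 0) (b i)) - (\<Sum>i<n. if i = 0 then smult (1/4) (b 0) else 0)"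
        by (simp add: sum_subtractf)
      also have "\<dots> = 0" using S n2 by simp
      finally have "(\<Sum>i<n. smult (c i) (b i)) = 0" .
      then have "c 1 = 0" using ob n2 unfolding ordered_basis_def by auto
      then have "Ms 1 0 = 0" by (simp add: c_def)
      moreover have "Ms (0 + 1) 0 \<noteq> 0" using irr n2 unfolding irred_tridiagonal_def by auto
      ultimately show False by simp
    qed
  next
    assume h: "2 * lam \<noteq> -1"
    define b1 where "b1 = (\<lambda>i::nat. if i = 0 then mk r s 1 0 else mk r s 0 1)"
    define b2 where "b2 = (\<lambda>i::nat. if i = 0 then mk r s 1 1 else mk r s a (a - 1))"
    have ob1: "ordered_basis (Pd 1) 2 b1"
      by (rule basis[OF t0(1)]) (simp_all add: b1_def deg_mk basicsS pmk)
    have ob2: "ordered_basis (Pd 1) 2 b2"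
      by (rule basis[OF t0(1)]) (simp_all add: b2_def deg_mk basicsS pmk)
    have r1: "represents 2 b1 (LL r s 1) (\<lambda>i j. crd t b1 i (LL r s 1 (b1 j)))"
      by (rule rep[OF t0(1)]) (simp_all add: b1_def deg_mk basicsS pmk dLL dLL[unfolded One_nat_def])
    have r1': "represents 2 b1 (B \<circ> B) (\<lambda>i j. crd t b1 i ((B \<circ> B) (b1 j)))"
      by (rule rep[OF t0(1)]) (simp_all add: b1_def deg_mk basicsS pmk dB dB[unfolded One_nat_def])
    have r2: "represents 2 b2 (LL r s 1) (\<lambda>i j. crd t b2 i (LL r s 1 (b2 j)))"
      by (rule rep[OF t0(1)]) (simp_all add: b2_def deg_mk basicsS pmk dLL dLL[unfolded One_nat_def])
    have r2': "represents 2 b2 (B \<circ> B) (\<lambda>i j. crd t b2 i ((B \<circ> B) (b2 j)))"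
      by (rule rep[OF t0(1)]) (simp_all add: b2_def deg_mk basicsS pmk dB dB[unfolded One_nat_def])
    have d1: "diagonal_mat 2 (\<lambda>i j. crd t b1 i (LL r s 1 (b1 j)))"
      unfolding diag2 by (simp add: crd_def b1_def pmk vLL vLLS)
    have i1: "irred_tridiagonal 2 (\<lambda>i j. crd t b1 i ((B \<circ> B) (b1 j)))"
    proof -
      have fac: "(1 - a) * (- 1 - lam) + lam * (a - 1) = -((1-a)*(1+2*lam))" by (simp add: algebra_simps)
      have h2: "1 + 2 * lam \<noteq> 0" using h by linarith
      have nz: "(1-a)*(1+2*lam) \<noteq> 0" using a1 h2 by simp
      show ?thesis unfolding irr2 using fac nz a0 h by (simp add: crd_def b1_def pmk vB)
    qed
    have i2: "irred_tridiagonal 2 (\<lambda>i j. crd t b2 i (LL r s 1 (b2 j)))"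
      unfolding irr2 using t0 a0 a1 by (simp add: crd_def b2_def pmk vLL vLLS)
    have d2: "diagonal_mat 2 (\<lambda>i j. crd t b2 i ((B \<circ> B) (b2 j)))"
      unfolding diag2 by (simp add: crd_def b2_def pmk vB) (simp add: algebra_simps)
    show "leonard_pair (Pd 1) (LL r s 1) (B \<circ> B)"
      unfolding leonard_pair_def using linLL linB ob1 ob2 r1 r1' r2 r2' d1 d2 i1 i2 by blast
  qed
  then show ?thesis unfolding B_def .
qed

end
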